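(* Let $K$ be a global function field, $\ell$ a rational prime coprime to the characteristic of $K$, and suppose a primitive $\ell$-th root of unity lies in $K$. Let $x,d,a\in K^*$ with $dx^\ell+d^\ell\neq0$ and $a+a^{-1}\neq0$, and let $H=K\left(\sqrt[\ell]{1+d^{-1}},\sqrt[\ell]{1+(dx^\ell+d^\ell)^{-1}},\sqrt[\ell]{1+(a+a^{-1})d^{-1}}\right)$. Then for every prime $\mathfrak{q}$ of $H$ which is not a pole of $d$ (i.e. $v_\mathfrak{q}(d)\ge0$): (i) $v_\mathfrak{q}(d)\equiv0\pmod\ell$; (ii) $v_\mathfrak{q}(dx^\ell+d^\ell)\equiv0\pmod\ell$; (iii) $v_\mathfrak{q}(a)\equiv0\pmod\ell$.
   Context: For a prime $\mathfrak{q}$ of a global function field, $v_\mathfrak{q}$ denotes the normalized discrete valuation. *)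

theory Defs
  imports "HOL-Computational_Algebra.Computational_Algebra"
begin

definition subfield_of :: "'a::field set \<Rightarrow> bool" where
  "subfield_of S \<longleftrightarrow> 0 \<in> S \<and> 1 \<in> S \<and>
     (\<forall>x\<in>S. \<forall>y\<in>S. x + y \<in> S \<and> x * y \<in> S) \<and>
     (\<forall>x\<in>S. - x \<in> S) \<and> (\<forall>x\<in>S. x \<noteq> 0 \<longrightarrow> inverse x \<in> S)"

text \<open>Subfield generated by a set (the prime field is gen_field {}).\<close>
definition gen_field :: "'a::field set \<Rightarrow> 'a set" where
  "gen_field S = \<Inter>{F. subfield_of F \<and> S \<subseteq> F}"

definition transcendental_over_prime_field :: "'a::field \<Rightarrow> bool" where
  "transcendental_over_prime_field t \<longleftrightarrow>
     (\<forall>q :: 'a poly. (\<forall>i. coeff q i \<in> gen_field {}) \<and> poly q t = 0 \<longrightarrow> q = 0)"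

definition finite_dim_over :: "'a::field set \<Rightarrow> 'a set \<Rightarrow> bool" where
  "finite_dim_over F K \<longleftrightarrow> (\<exists>B. finite B \<and> B \<subseteq> K \<and>
     (\<forall>z\<in>K. \<exists>c. (\<forall>b\<in>B. c b \<in> F) \<and> z = (\<Sum>b\<in>B. c b * b)))"

definition global_function_field :: "'a::field set \<Rightarrow> bool" where
  "global_function_field K \<longleftrightarrow> subfield_of K \<and> CHAR('a) > 0 \<and>
     (\<exists>t\<in>K. transcendental_over_prime_field t \<and> finite_dim_over (gen_field {t}) K)"

definition primitive_root_of_unity :: "nat \<Rightarrow> 'a::field \<Rightarrow> bool" where
  "primitive_root_of_unity n z \<longleftrightarrow> z ^ n = 1 \<and> (\<forall>k. 0 < k \<and> k < n \<longrightarrow> z ^ k \<noteq> 1)"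

text \<open>A prime q of the field H, represented by its normalized discrete valuation v_q
  (values on H - {0}; surjective onto the integers).\<close>
definition normalized_discrete_valuation :: "'a::field set \<Rightarrow> ('a \<Rightarrow> int) \<Rightarrow> bool" where
  "normalized_discrete_valuation H v \<longleftrightarrow>
     (\<forall>x\<in>H-{0}. \<forall>y\<in>H-{0}. v (x * y) = v x + v y) \<and>
     (\<forall>x\<in>H-{0}. \<forall>y\<in>H-{0}. x + y \<noteq> 0 \<longrightarrow> min (v x) (v y) \<le> v (x + y)) \<and>
     (\<forall>n::int. \<exists>x\<in>H-{0}. v x = n)"

end

theory Submission
  imports Defs
begin

lemma gen_field_sub: "subfield_of (gen_field S)"
  unfolding gen_field_def subfield_of_def by auto

lemma gen_field_incl: "S \<subseteq> gen_field S"
  unfolding gen_field_def by auto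

lemma sf_mult: "subfield_of H \<Longrightarrow> x \<in> H \<Longrightarrow> y \<in> H \<Longrightarrow> x * y \<in> H"
  unfolding subfield_of_def by blast
lemma sf_add: "subfield_of H \<Longrightarrow> x \<in> H \<Longrightarrow> y \<in> H \<Longrightarrow> x + y \<in> H"
  unfolding subfield_of_def by blast
lemma sf_neg: "subfield_of H \<Longrightarrow> x \<in> H \<Longrightarrow> - x \<in> H"
  unfolding subfield_of_def by blast
lemma sf_one: "subfield_of H \<Longrightarrow> 1 \<in> H"
  unfolding subfield_of_def by blast
lemma sf_inv: "subfield_of H \<Longrightarrow> x \<in> H \<Longrightarrow> inverse x \<in> H"
  unfolding subfield_of_def by (cases "x = 0") auto
lemma sf_pow: "subfield_of H \<Longrightarrow> x \<in> H \<Longrightarrow> x ^ n \<in> H"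
  by (induction n) (auto intro: sf_one sf_mult)

locale vH =
  fixes H :: "'a::field set" and v :: "'a \<Rightarrow> int"
  assumes sf: "subfield_of H" and nv: "normalized_discrete_valuation H v"
begin

lemma vmult: "x \<in> H \<Longrightarrow> y \<in> H \<Longrightarrow> x \<noteq> 0 \<Longrightarrow> y \<noteq> 0 \<Longrightarrow> v (x * y) = v x + v y"
  using nv unfolding normalized_discrete_valuation_def by blast

lemma vultra: "x \<in> H \<Longrightarrow> y \<in> H \<Longrightarrow> x \<noteq> 0 \<Longrightarrow> y \<noteq> 0 \<Longrightarrow> x + y \<noteq> 0 \<Longrightarrow> min (v x) (v y) \<le> v (x + y)"
  using nv unfolding normalized_discrete_valuation_def by blast

lemma v1: "v 1 = 0"
  using vmult[of 1 1] sf_one[OF sf] by simp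

lemma vm1: "v (-1) = 0"
proof -
  have "v ((-1) * (-1)) = v (-1) + v (-1)"
    by (rule vmult) (auto intro: sf_neg sf_one sf)
  then show ?thesis using v1 by simp
qed

lemma vneg: "x \<in> H \<Longrightarrow> x \<noteq> 0 \<Longrightarrow> v (- x) = v x"
  using vmult[of "-1" x] vm1 sf_neg[OF sf sf_one[OF sf]] by simp

lemma vinv: "x \<in> H \<Longrightarrow> x \<noteq> 0 \<Longrightarrow> v (inverse x) = - v x"
  using vmult[of x "inverse x"] v1 sf_inv[OF sf, of x] by simp

lemma vpow: "x \<in> H \<Longrightarrow> x \<noteq> 0 \<Longrightarrow> v (x ^ n) = int n * v x"
proof (induction n)
  case 0 then show ?case using v1 by simp
next
  case (Suc n)
  have "v (x * x ^ n) = v x + v (x ^ n)"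
    by (rule vmult) (use Suc sf_pow[OF sf] in auto)
  then show ?case using Suc by (simp add: algebra_simps)
qed

lemma vlt: assumes "x \<in> H" "y \<in> H" "x \<noteq> 0" "y \<noteq> 0" "v x < v y"
  shows "x + y \<noteq> 0 \<and> v (x + y) = v x"
proof -
  have ne: "x + y \<noteq> 0"
  proof
    assume "x + y = 0"
    then have "y = - x" by (simp add: add_eq_0_iff2)
    then show False using vneg[of x] assms by simp
  qed
  have xyH: "x + y \<in> H" using sf_add[OF sf] assms by auto
  have a: "min (v x) (v y) \<le> v (x + y)" using vultra assms ne by blast
  have "min (v (x + y)) (v (- y)) \<le> v ((x + y) + - y)"
    by (rule vultra) (use xyH ne assms sf_neg[OF sf] in auto)
  then have "min (v (x + y)) (v y) \<le> v x" using vneg assms by simp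
  then show ?thesis using a ne assms by auto
qed

lemma vroot: assumes "y \<in> H" "w \<in> H" "w \<noteq> 0" "v w < 0" "y ^ l = 1 + w" "l > 0"
  shows "int l dvd v w"
proof -
  have "w + 1 \<noteq> 0 \<and> v (w + 1) = v w"
    using vlt[of w 1] assms v1 sf_one[OF sf] by auto
  then have h: "1 + w \<noteq> 0" "v (1 + w) = v w" by (auto simp: add.commute)
  then have "y \<noteq> 0" using assms by (metis zero_power)
  then have "v (y ^ l) = int l * v y" using vpow assms by blast
  then show ?thesis using h assms by simp
qed

end

theorem lemma3p7:
  fixes K :: "'a::field set" and l :: nat and x d a y1 y2 y3 :: 'a and v :: "'a \<Rightarrow> int"
  assumes "global_function_field K"
    and "prime l" and "coprime l CHAR('a)"
    and "\<exists>\<zeta>\<in>K. primitive_root_of_unity l \<zeta>"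
    and "x \<in> K" and "d \<in> K" and "a \<in> K"
    and "x \<noteq> 0" and "d \<noteq> 0" and "a \<noteq> 0"
    and "d * x ^ l + d ^ l \<noteq> 0" and "a + inverse a \<noteq> 0"
    and "y1 ^ l = 1 + inverse d"
    and "y2 ^ l = 1 + inverse (d * x ^ l + d ^ l)"
    and "y3 ^ l = 1 + (a + inverse a) * inverse d"
    and "normalized_discrete_valuation (gen_field (K \<union> {y1, y2, y3})) v"
    and "v d \<ge> 0"
  shows "int l dvd v d \<and> int l dvd v (d * x ^ l + d ^ l) \<and> int l dvd v a"
proof -
  define H where "H = gen_field (K \<union> {y1, y2, y3})"
  have sf: "subfield_of H" unfolding H_def by (rule gen_field_sub)
  interpret vH H v using sf assms(16) unfolding H_def by unfold_locales auto
  have inc: "K \<union> {y1, y2, y3} \<subseteq> H" unfolding H_def by (rule gen_field_incl)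
  have xH: "x \<in> H" and dH: "d \<in> H" and aH: "a \<in> H" and y1H: "y1 \<in> H"
    and y2H: "y2 \<in> H" and y3H: "y3 \<in> H" using inc assms by auto
  have l0: "l > 0" using assms(2) prime_gt_0_nat by blast
  note cl = sf_mult[OF sf] sf_add[OF sf] sf_inv[OF sf] sf_pow[OF sf]
  have i: "int l dvd v d"
  proof (cases "v d = 0")
    case True then show ?thesis by simp
  next
    case False
    then have "v (inverse d) < 0" using vinv dH assms by simp
    then have "int l dvd v (inverse d)"
      using vroot[of y1 "inverse d" l] y1H dH cl assms l0 by auto
    then show ?thesis using vinv dH assms by simp
  qed
  define e where "e = d * x ^ l + d ^ l"
  have eH: "e \<in> H" unfolding e_def using cl xH dH by auto
  have e0: "e \<noteq> 0" using assms unfolding e_def by simp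
  have ii: "int l dvd v e"
  proof (cases "v e" "0::int" rule: linorder_cases)
    case less
    have dx0: "d * x ^ l \<noteq> 0" using assms by simp
    have dxH: "d * x ^ l \<in> H" using cl xH dH by auto
    have vdl: "v (d ^ l) = int l * v d" using vpow dH assms by blast
    have vdx: "v (d * x ^ l) = v d + int l * v x"
      using vmult[OF dH cl(4)[OF xH]] vpow[OF xH] assms by simp
    have dlH: "d ^ l \<in> H" using cl dH by auto
    have "min (v (d * x ^ l)) (v (d ^ l)) \<le> v e"
      unfolding e_def by (rule vultra) (use dxH dlH dx0 assms e0 e_def in auto)
    moreover have "v (d ^ l) \<ge> 0" using vdl assms by simp
    ultimately have lt: "v (d * x ^ l) < v (d ^ l)" using less by linarith
    have "v e = v (d * x ^ l)" unfolding e_def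
      using vlt[OF dxH dlH dx0 _ lt] assms by simp
    then show ?thesis using vdx i by simp
  next
    case equal then show ?thesis by simp
  next
    case greater
    then have "v (inverse e) < 0" using vinv eH e0 by simp
    then have "int l dvd v (inverse e)"
      using vroot[of y2 "inverse e" l] y2H eH cl assms l0 e0 unfolding e_def by auto
    then show ?thesis using vinv eH e0 by simp
  qed
  define b where "b = a + inverse a"
  have bH: "b \<in> H" unfolding b_def using cl aH by auto
  have b0: "b \<noteq> 0" using assms b_def by simp
  have iaH: "inverse a \<in> H" using cl aH by auto
  have ia0: "inverse a \<noteq> 0" using assms by simp
  have iii: "int l dvd v a"
  proof (cases "v a = 0")
    case True then show ?thesis by simp
  next
    case False
    have vb: "v b = - \<bar>v a\<bar>"
    proof (cases "v a > 0")
      case True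
      then have "v (inverse a) < v a" using vinv aH assms by simp
      then have "v (inverse a + a) = v (inverse a)" using vlt[OF iaH aH ia0] assms by simp
      then show ?thesis using True vinv aH assms b_def by (simp add: add.commute)
    next
      case f: False
      then have "v a < v (inverse a)" using vinv aH assms False by simp
      then have "v (a + inverse a) = v a" using vlt[OF aH iaH] ia0 assms by simp
      then show ?thesis using f b_def by simp
    qed
    define c where "c = b * inverse d"
    have cH: "c \<in> H" unfolding c_def using cl bH dH by auto
    have c0: "c \<noteq> 0" unfolding c_def using b0 assms by simp
    have vc: "v c = v b - v d" unfolding c_def
      using vmult[OF bH cl(3)[OF dH] b0] vinv[OF dH] assms by simp
    have "v c < 0" using vc vb False assms by simp
    then have "int l dvd v c"
      using vroot[of y3 c l] y3H cH c0 l0 assms unfolding c_def b_def by auto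
    then have "int l dvd \<bar>v a\<bar>" using vc vb i by (metis add_diff_cancel_left' diff_add_cancel dvd_add dvd_minus_iff)
    then show ?thesis by simp
  qed
  show ?thesis using i ii iii unfolding e_def by simp
qed

end
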